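(* Let $R$ be a semistandard cylindric tableau and $S$ a set of boxes satisfying the input conditions of full multi-insertion, and perform $\operatorname{FullMulti}(R,S)$. Then for every row $r$, the list of entries inserted into row $r$ during the one-step phases (placed into a box of row $r$, whether by landing or by bumping), in the order in which they were inserted, is weakly increasing.
   Context: Fix integers $n>k\ge1$. A cylindric partition is a weakly decreasing integer sequence $(\lambda_m)_{m\in\mathbb Z}$ with $\lambda_m=\lambda_{m+k}+n-k$. A point $(x,y)\in\mathbb Z^2$ lies in $\lambda$ if $y\le\lambda_x$. Boxes are classes of points modulo translation by multiples of $(-k,n-k)$; row $x$ of the cylinder is the image of plane row $x$ (indexed mod $k$), column $y$ the image of plane column $y$; within a row boxes are ordered left to right by $y$-coordinates of representatives in a fixed plane row. $\mu\subseteq\lambda$ means $\mu_m\le\lambda_m$ for all $m$. A (semistandard cylindric) tableau of shape $\lambda/\mu$ is a map from the boxes in $\lambda$ but not $\mu$ to a totally ordered alphabet, weakly increasing along plane rows and strictly increasing down plane columns; its shapes are part of its data. Full multi-insertion $\operatorname{FullMulti}(R,S)$: input a tableau $R$ with outer shape $\lambda$, inner shape $\mu$, and a set $S$ of boxes not in $\mu$, no two in the same column, such that $\mu$ plus $S$ is a cylindric partition. Choose an integer $r_0$. For $h=r_0,\dots,r_0+k-1$, go through the boxes of $S$ in row $h$ from left to right: if the box is in $\lambda$, remove its entry $x$ and append $(x,h+1)$ to a queue; otherwise add the box to $\lambda$. All boxes of $S$ are added to the inner shape. Then, while the current queue $q$ is nonempty: start an empty queue $q'$; remove pairs $(x,s)$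 from the front of $q$ one at a time; if $x$ is $\ge$ every entry in row $s$, put $x$ into the leftmost box of row $s$ not in the current outer shape and add it to the outer shape (a landing); otherwise replace the leftmost entry $x'$ of row $s$ greater than $x$ by $x$ (a bump) and append $(x',s+1)$ to $q'$; when $q$ is exhausted set $q:=q'$. All actions are performed one at a time, giving a time order. *)

theory Defs
  imports Main
begin

text \<open>Points of the plane are pairs (x,y) :: int * int; x is the (plane) row index,
y the column index. Boxes of the cylinder are orbits of points under translation
by multiples of (-k, n-k). Shapes, sets of boxes and tableaux are represented on
points, invariantly under this translation.\<close>

definition cyl_part :: "int \<Rightarrow> int \<Rightarrow> (int \<Rightarrow> int) \<Rightarrow> bool" where
  "cyl_part n k lam \<longleftrightarrow> (\<forall>m. lam (m + 1) \<le> lam m) \<and> (\<forall>m. lam m = lam (m + k) + n - k)"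

definition shape :: "(int \<Rightarrow> int) \<Rightarrow> (int \<times> int) set" where
  "shape lam = {(x, y). y \<le> lam x}"

definition orbit :: "int \<Rightarrow> int \<Rightarrow> int \<times> int \<Rightarrow> (int \<times> int) set" where
  "orbit n k p = {(fst p - j * k, snd p + j * (n - k)) | j. True}"

definition upd_orbit :: "int \<Rightarrow> int \<Rightarrow> (int \<times> int \<Rightarrow> 'b) \<Rightarrow> int \<times> int \<Rightarrow> 'b \<Rightarrow> (int \<times> int \<Rightarrow> 'b)" where
  "upd_orbit n k F p v = (\<lambda>q. if q \<in> orbit n k p then v else F q)"

definition cyl_tableau :: "int \<Rightarrow> int \<Rightarrow> (int \<Rightarrow> int) \<Rightarrow> (int \<Rightarrow> int) \<Rightarrow> (int \<times> int \<Rightarrow> 'a::linorder option) \<Rightarrow> bool" where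
  "cyl_tableau n k lam mu F \<longleftrightarrow>
     cyl_part n k lam \<and> cyl_part n k mu \<and> (\<forall>m. mu m \<le> lam m) \<and>
     (\<forall>x y. F (x, y) \<noteq> None \<longleftrightarrow> mu x < y \<and> y \<le> lam x) \<and>
     (\<forall>x y. F (x, y) = F (x - k, y + (n - k))) \<and>
     (\<forall>x y a b. F (x, y) = Some a \<longrightarrow> F (x, y + 1) = Some b \<longrightarrow> a \<le> b) \<and>
     (\<forall>x y a b. F (x, y) = Some a \<longrightarrow> F (x + 1, y) = Some b \<longrightarrow> a < b)"

definition multi_input :: "int \<Rightarrow> int \<Rightarrow> (int \<Rightarrow> int) \<Rightarrow> (int \<times> int) set \<Rightarrow> bool" where
  "multi_input n k mu S \<longleftrightarrow>
     (\<forall>x y. (x, y) \<in> S \<longleftrightarrow> (x - k, y + (n - k)) \<in> S) \<and>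
     S \<inter> shape mu = {} \<and>
     (\<forall>x x' y. (x, y) \<in> S \<longrightarrow> (x', y) \<in> S \<longrightarrow> x = x') \<and>
     (\<exists>nu. cyl_part n k nu \<and> shape nu = shape mu \<union> S)"

record 'a fmst =
  outer :: "(int \<times> int) set"
  inner :: "(int \<times> int) set"
  filling :: "int \<times> int \<Rightarrow> 'a option"
  cur :: "('a \<times> int) list"
  nxt :: "('a \<times> int) list"
  inslog :: "(int \<times> 'a) list"

definition init_box :: "int \<Rightarrow> int \<Rightarrow> int \<times> int \<Rightarrow> 'a fmst \<Rightarrow> 'a fmst" where
  "init_box n k b st =
     (if b \<in> outer st then
        st\<lparr> filling := upd_orbit n k (filling st) b None,
            inner := inner st \<union> orbit n k b,
            cur := cur st @ [(the (filling st b), fst b + 1)] \<rparr>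
      else
        st\<lparr> outer := outer st \<union> orbit n k b,
            inner := inner st \<union> orbit n k b \<rparr>)"

definition init_order :: "int \<Rightarrow> (int \<times> int) set \<Rightarrow> int \<Rightarrow> (int \<times> int) list" where
  "init_order k S r0 =
     concat (map (\<lambda>h. map (\<lambda>y. (h, y)) (sorted_list_of_set {y. (h, y) \<in> S})) [r0..r0 + k - 1])"

definition fm_init :: "int \<Rightarrow> int \<Rightarrow> (int \<Rightarrow> int) \<Rightarrow> (int \<Rightarrow> int) \<Rightarrow> (int \<times> int \<Rightarrow> 'a option)
    \<Rightarrow> (int \<times> int) set \<Rightarrow> int \<Rightarrow> 'a fmst" where
  "fm_init n k lam mu F S r0 =
     fold (init_box n k) (init_order k S r0)
       \<lparr> outer = shape lam, inner = shape mu, filling = F, cur = [], nxt = [], inslog = [] \<rparr>"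

inductive fm_step :: "int \<Rightarrow> int \<Rightarrow> 'a::linorder fmst \<Rightarrow> 'a fmst \<Rightarrow> bool" for n k where
  phase: "cur st = [] \<Longrightarrow> nxt st \<noteq> [] \<Longrightarrow>
     fm_step n k st (st\<lparr> cur := nxt st, nxt := [] \<rparr>)"
| land: "cur st = (x, s) # rest \<Longrightarrow>
     (\<forall>y v. filling st (s, y) = Some v \<longrightarrow> v \<le> x) \<Longrightarrow>
     y0 = (LEAST y. (s, y) \<notin> outer st) \<Longrightarrow>
     fm_step n k st (st\<lparr> outer := outer st \<union> orbit n k (s, y0),
                         filling := upd_orbit n k (filling st) (s, y0) (Some x),
                         cur := rest,
                         inslog := inslog st @ [(s mod k, x)] \<rparr>)"
| bump: "cur st = (x, s) # rest \<Longrightarrow>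
     \<not> (\<forall>y v. filling st (s, y) = Some v \<longrightarrow> v \<le> x) \<Longrightarrow>
     y1 = (LEAST y. \<exists>v. filling st (s, y) = Some v \<and> x < v) \<Longrightarrow>
     filling st (s, y1) = Some x' \<Longrightarrow>
     fm_step n k st (st\<lparr> filling := upd_orbit n k (filling st) (s, y1) (Some x),
                         cur := rest,
                         nxt := nxt st @ [(x', s + 1)],
                         inslog := inslog st @ [(s mod k, x)] \<rparr>)"

definition row_insertions :: "int \<Rightarrow> 'a fmst \<Rightarrow> 'a list" where
  "row_insertions r st = map snd (filter (\<lambda>e. fst e = r) (inslog st))"

end

theory Submission
  imports Defs
begin

lemma shift_nat:
  fixes G :: "int \<times> int \<Rightarrow> 'b" and k n x y :: int
  assumes "\<forall>x y. G (x,y) = G (x-k, y+(n-k))"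
  shows "G (x,y) = G (x - int m*k, y + int m*(n-k))"
proof (induction m arbitrary: x y)
  case 0 then show ?case by simp
next
  case (Suc m)
  have "G (x - int (Suc m)*k, y + int (Suc m)*(n-k)) = G ((x - int m*k) - k, (y + int m*(n-k)) + (n-k))"
    by (simp add: algebra_simps)
  also have "\<dots> = G (x - int m*k, y + int m*(n-k))" by (rule assms[rule_format, symmetric])
  finally show ?case using Suc by simp
qed

lemma shift_int:
  fixes G :: "int \<times> int \<Rightarrow> 'b" and k n x y j :: int
  assumes "\<forall>x y. G (x,y) = G (x-k, y+(n-k))"
  shows "G (x,y) = G (x - j*k, y + j*(n-k))"
proof (cases "j \<ge> 0")
  case True
  then obtain m where "j = int m" using nonneg_int_cases by blast
  then show ?thesis using shift_nat[OF assms, of x y m] by simp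
next
  case False
  define m where "m = nat (-j)"
  have m: "j = - int m" using False unfolding m_def by simp
  have "G (x + int m*k, y - int m*(n-k)) = G ((x + int m*k) - int m*k, (y - int m*(n-k)) + int m*(n-k))"
    using shift_nat[OF assms, of "x + int m*k" "y - int m*(n-k)" m] by simp
  then show ?thesis using m by (simp add: algebra_simps)
qed

lemma orbit_mem: "q \<in> orbit n k p \<longleftrightarrow> (\<exists>j. q = (fst p - j*k, snd p + j*(n-k)))"
  unfolding orbit_def by auto

lemma orbit_inv:
  fixes G :: "int \<times> int \<Rightarrow> 'b"
  assumes "\<forall>x y. G (x,y) = G (x-k, y+(n-k))" and "q \<in> orbit n k p"
  shows "G q = G p"
proof -
  obtain j where "q = (fst p - j*k, snd p + j*(n-k))" using assms(2) orbit_mem by blast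
  then show ?thesis using shift_int[OF assms(1), of "fst p" "snd p" j] by simp
qed

lemma orbit_self: "p \<in> orbit n k p"
  unfolding orbit_mem by (rule exI[of _ 0]) simp

lemma orbit_sym: "q \<in> orbit n k p \<Longrightarrow> p \<in> orbit n k q"
  proof -
  assume "q \<in> orbit n k p"
  then obtain j where "q = (fst p - j*k, snd p + j*(n-k))" using orbit_mem by blast
  then show ?thesis unfolding orbit_mem by (intro exI[of _ "-j"]) (auto simp: algebra_simps)
qed

lemma orbit_shift: "(x,y) \<in> orbit n k p \<longleftrightarrow> (x-k, y+(n-k)) \<in> orbit n k p"
proof
  assume "(x,y) \<in> orbit n k p"
  then obtain j where "(x,y) = (fst p - j*k, snd p + j*(n-k))" using orbit_mem by blast
  then show "(x-k, y+(n-k)) \<in> orbit n k p" unfolding orbit_mem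
    by (intro exI[of _ "j+1"]) (auto simp: algebra_simps)
next
  assume "(x-k, y+(n-k)) \<in> orbit n k p"
  then obtain j where "(x-k, y+(n-k)) = (fst p - j*k, snd p + j*(n-k))" using orbit_mem by blast
  then show "(x,y) \<in> orbit n k p" unfolding orbit_mem
    by (intro exI[of _ "j-1"]) (auto simp: algebra_simps)
qed

lemma upd_orbit_inv:
  assumes "\<forall>x y. G (x,y) = G (x-k, y+(n-k))"
  shows "\<forall>x y. upd_orbit n k G p v (x,y) = upd_orbit n k G p v (x-k, y+(n-k))"
proof (intro allI)
  fix x y
  have "((x,y) \<in> orbit n k p) = ((x-k, y+(n-k)) \<in> orbit n k p)" by (rule orbit_shift)
  moreover have "G (x,y) = G (x-k, y+(n-k))" using assms by blast
  ultimately show "upd_orbit n k G p v (x,y) = upd_orbit n k G p v (x-k, y+(n-k))"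
    unfolding upd_orbit_def by simp
qed

lemma orbit_row: "(x,y) \<in> orbit n k p \<Longrightarrow> (x,y') \<in> orbit n k p \<Longrightarrow> (k::int) \<ge> 1 \<Longrightarrow> y = y'"
  unfolding orbit_mem by auto

lemma orbit_mod: "(x,y) \<in> orbit n k p \<Longrightarrow> x mod k = fst p mod k"
proof -
  assume "(x,y) \<in> orbit n k p"
  then obtain j where "x = fst p - j*k" using orbit_mem by auto
  moreover have "(fst p + (-j)*k) mod k = fst p mod k" by (rule mod_mult_self1)
  ultimately show ?thesis by simp
qed

lemma same_mod_shift:
  fixes s s' k :: int
  assumes "s' mod k = s mod k"
  shows "s' = s - ((s - s') div k) * k"
proof -
  have "k dvd (s - s')" using assms by (metis mod_eq_dvd_iff)
  then show ?thesis by auto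
qed

lemma cyl_shape_inv:
  assumes "cyl_part n k lam"
  shows "\<forall>x y. ((x,y) \<in> shape lam) = ((x-k, y+(n-k)) \<in> shape lam)"
proof (intro allI)
  fix x y
  have "lam (x-k) = lam ((x-k)+k) + n - k" using assms unfolding cyl_part_def by blast
  then have "lam (x-k) = lam x + n - k" by simp
  then show "((x,y) \<in> shape lam) = ((x-k, y+(n-k)) \<in> shape lam)" unfolding shape_def by auto
qed

lemma int_least:
  fixes P :: "int \<Rightarrow> bool"
  assumes "P a" and "\<forall>y. P y \<longrightarrow> b \<le> y"
  shows "P (LEAST y. P y) \<and> (\<forall>z. P z \<longrightarrow> (LEAST y. P y) \<le> z)"
proof -
  define m where "m = (LEAST i::nat. P (b + int i))"
  have "b \<le> a" using assms by auto
  then have ex: "P (b + int (nat (a - b)))" using assms(1) by simp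
  have pm: "P (b + int m)" unfolding m_def by (rule LeastI[where P="\<lambda>i. P (b + int i)", OF ex])
  have mm: "\<forall>z. P z \<longrightarrow> b + int m \<le> z"
  proof (intro allI impI)
    fix z assume "P z"
    then have "b \<le> z" using assms by auto
    then have "P (b + int (nat (z - b)))" using \<open>P z\<close> by simp
    then have "m \<le> nat (z - b)" unfolding m_def by (rule Least_le)
    then show "b + int m \<le> z" using \<open>b \<le> z\<close> by linarith
  qed
  have "(LEAST y. P y) = b + int m"
    by (rule Least_equality) (use pm mm in auto)
  then show ?thesis using pm mm by simp
qed


lemma F_row_mono:
  assumes T: "cyl_tableau n k lam mu F"
  shows "F (s,a) = Some p \<Longrightarrow> F (s, a + int d) = Some q \<Longrightarrow> p \<le> q"
proof (induction d arbitrary: q)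
  case 0 then show ?case by simp
next
  case (Suc d)
  have sup: "\<forall>x y. F (x, y) \<noteq> None \<longleftrightarrow> mu x < y \<and> y \<le> lam x"
   and row: "\<forall>x y a b. F (x, y) = Some a \<longrightarrow> F (x, y + 1) = Some b \<longrightarrow> a \<le> b"
    using T unfolding cyl_tableau_def by blast+
  have "mu s < a" using sup Suc.prems(1) by blast
  moreover have "a + int (Suc d) \<le> lam s" using sup Suc.prems(2) by blast
  ultimately have "F (s, a + int d) \<noteq> None" using sup by auto
  then obtain r where r: "F (s, a + int d) = Some r" by auto
  then have "p \<le> r" using Suc.IH Suc.prems(1) by blast
  moreover have "a + int (Suc d) = (a + int d) + 1" by simp
  then have "F (s, (a + int d) + 1) = Some q" using Suc.prems(2) by (simp only:)
  then have "r \<le> q" using row r by blast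
  ultimately show ?case by simp
qed

lemma F_row_mono':
  assumes T: "cyl_tableau n k lam mu F" and "F (s,a) = Some p" "F (s, b) = Some q" "a \<le> b"
  shows "p \<le> q"
proof -
  have "b = a + int (nat (b - a))" using assms(4) by simp
  then show ?thesis using F_row_mono[OF T, of s a p "nat (b-a)" q] assms(2,3) by simp
qed

definition wl :: "int \<Rightarrow> int \<Rightarrow> 'a fmst \<Rightarrow> 'a list" where
  "wl k r st = row_insertions r st @ map fst (filter (\<lambda>e. snd e mod k = r) (cur st @ nxt st))"

definition Inv :: "int \<Rightarrow> int \<Rightarrow> (int\<Rightarrow>int) \<Rightarrow> (int\<Rightarrow>int) \<Rightarrow> (int\<times>int \<Rightarrow> 'a::linorder option) \<Rightarrow> 'a fmst \<Rightarrow> bool" where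
"Inv n k lam mu F st \<longleftrightarrow>
 (\<forall>x y. filling st (x,y) = filling st (x-k, y+(n-k))) \<and>
 (\<forall>r. sorted (wl k r st)) \<and>
 (\<forall>s y v. filling st (s,y) = Some v \<longrightarrow> F (s,y) = Some v \<or> v \<in> set (row_insertions (s mod k) st)) \<and>
 (\<forall>s y v w. filling st (s,y) = Some v \<longrightarrow> F (s,y) = Some v \<longrightarrow> (\<forall>u\<in>set (row_insertions (s mod k) st). u < v)
      \<longrightarrow> w \<in> set (wl k ((s+1) mod k) st) \<longrightarrow> w \<le> v) \<and>
 (\<forall>p. filling st p \<noteq> None \<longrightarrow> p \<notin> shape mu) \<and>
 (\<forall>s. \<exists>B. \<forall>y. (s,y) \<in> outer st \<longrightarrow> y \<le> B) \<and>
 shape lam \<subseteq> outer st"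

lemma Inv_final: "Inv n k lam mu F st \<Longrightarrow> sorted (row_insertions r st)"
proof -
  assume "Inv n k lam mu F st"
  then have "sorted (wl k r st)" unfolding Inv_def by blast
  then show ?thesis unfolding wl_def sorted_append by blast
qed


lemma Inv_step:
  fixes st st' :: "'a::linorder fmst"
  assumes k: "1 \<le> k" and T: "cyl_tableau n k lam mu F" and I: "Inv n k lam mu F st"
    and STEP: "fm_step n k st st'"
  shows "Inv n k lam mu F st'"
proof -
  have I0: "\<forall>x y. filling st (x,y) = filling st (x-k, y+(n-k))"
   and I1: "\<forall>r. sorted (wl k r st)"
   and I3: "\<forall>s y v. filling st (s,y) = Some v \<longrightarrow> F (s,y) = Some v \<or> v \<in> set (row_insertions (s mod k) st)"
   and I2: "\<forall>s y v w. filling st (s,y) = Some v \<longrightarrow> F (s,y) = Some v \<longrightarrow> (\<forall>u\<in>set (row_insertions (s mod k) st). u < v)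
      \<longrightarrow> w \<in> set (wl k ((s+1) mod k) st) \<longrightarrow> w \<le> v"
   and I4: "\<forall>p. filling st p \<noteq> None \<longrightarrow> p \<notin> shape mu"
   and I5: "\<forall>s. \<exists>B. \<forall>y. (s,y) \<in> outer st \<longrightarrow> y \<le> B"
   and I6: "shape lam \<subseteq> outer st"
    using I unfolding Inv_def by blast+
  have Finv: "\<forall>x y. F (x,y) = F (x-k, y+(n-k))" using T unfolding cyl_tableau_def by blast
  have mulam: "shape mu \<subseteq> shape lam" using T unfolding cyl_tableau_def shape_def
    by (auto intro: order_trans)
  have mu_inv: "\<forall>x y. ((x,y) \<in> shape mu) = ((x-k, y+(n-k)) \<in> shape mu)"
    using cyl_shape_inv T unfolding cyl_tableau_def by blast
  show ?thesis using STEP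
  proof cases
    case phase
    have "wl k r st' = wl k r st" for r using phase unfolding wl_def row_insertions_def by simp
    moreover have "row_insertions r st' = row_insertions r st" for r using phase unfolding row_insertions_def by simp
    ultimately show ?thesis using I phase unfolding Inv_def by simp
  next
    case (land x s rest y0)
    let ?O = "orbit n k (s,y0)"
    have log': "row_insertions r st' = row_insertions r st @ (if s mod k = r then [x] else [])" for r
      using land unfolding row_insertions_def by simp
    have wl': "wl k r st' = wl k r st" for r
      using land unfolding wl_def row_insertions_def by simp
    have fill': "filling st' q = (if q \<in> ?O then Some x else filling st q)" for q
      using land unfolding upd_orbit_def by simp
    have logsub: "set (row_insertions r st) \<subseteq> set (row_insertions r st')" for r
      using log' by auto
    have xin: "x \<in> set (row_insertions (s mod k) st')" using log' by simp
    obtain B where B: "\<forall>y. (s,y) \<in> outer st \<longrightarrow> y \<le> B" using I5 by blast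
    have "(s, B+1) \<notin> outer st" using B by fastforce
    moreover have A2: "\<forall>y. (s,y) \<notin> outer st \<longrightarrow> lam s \<le> y"
    proof (intro allI impI)
      fix y assume "(s,y) \<notin> outer st"
      then have "(s,y) \<notin> shape lam" using I6 by blast
      then show "lam s \<le> y" unfolding shape_def by simp
    qed
    ultimately have "(s, (LEAST y. (s,y) \<notin> outer st)) \<notin> outer st"
      using int_least[where P="\<lambda>y. (s,y) \<notin> outer st"] by blast
    then have "(s, y0) \<notin> outer st" using land(4) by simp
    then have y0mu: "(s,y0) \<notin> shape mu" using I6 mulam by blast
    have J0: "\<forall>x y. filling st' (x,y) = filling st' (x-k, y+(n-k))"
      using upd_orbit_inv[OF I0] land by simp
    have J1: "\<forall>r. sorted (wl k r st')" using I1 wl' by simp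
    have J3: "\<forall>s y v. filling st' (s,y) = Some v \<longrightarrow> F (s,y) = Some v \<or> v \<in> set (row_insertions (s mod k) st')"
    proof (intro allI impI)
      fix s2 y v assume h: "filling st' (s2,y) = Some v"
      show "F (s2,y) = Some v \<or> v \<in> set (row_insertions (s2 mod k) st')"
      proof (cases "(s2,y) \<in> ?O")
        case True
        then have "s2 mod k = s mod k" using orbit_mod by fastforce
        then show ?thesis using True h fill' xin by simp
      next
        case False
        then have "filling st (s2,y) = Some v" using h fill'[of "(s2,y)"] by simp
        then show ?thesis using I3 logsub by blast
      qed
    qed
    have J2: "\<forall>s y v w. filling st' (s,y) = Some v \<longrightarrow> F (s,y) = Some v \<longrightarrow> (\<forall>u\<in>set (row_insertions (s mod k) st'). u < v)
      \<longrightarrow> w \<in> set (wl k ((s+1) mod k) st') \<longrightarrow> w \<le> v"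
    proof (intro allI impI)
      fix s2 y v w
      assume h1: "filling st' (s2,y) = Some v" and h2: "F (s2,y) = Some v"
        and h3: "\<forall>u\<in>set (row_insertions (s2 mod k) st'). u < v"
        and h4: "w \<in> set (wl k ((s2+1) mod k) st')"
      have nO: "(s2,y) \<notin> ?O"
      proof
        assume a: "(s2,y) \<in> ?O"
        then have "s2 mod k = s mod k" using orbit_mod by fastforce
        then have "x < v" using h3 xin by simp
        moreover have "v = x" using a h1 fill' by simp
        ultimately show False by simp
      qed
      then have "filling st (s2,y) = Some v" using h1 fill' by simp
      moreover have "w \<in> set (wl k ((s2+1) mod k) st)" using h4 wl' by simp
      moreover have "\<forall>u\<in>set (row_insertions (s2 mod k) st). u < v" using h3 logsub by blast
      ultimately show "w \<le> v" using I2 h2 by blast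
    qed
    have J4: "\<forall>p. filling st' p \<noteq> None \<longrightarrow> p \<notin> shape mu"
    proof (intro allI impI)
      fix p assume h: "filling st' p \<noteq> None"
      show "p \<notin> shape mu"
      proof (cases "p \<in> ?O")
        case True
        have "(p \<in> shape mu) = ((s,y0) \<in> shape mu)"
          using orbit_inv[where G="\<lambda>p. p \<in> shape mu", OF mu_inv True] .
        then show ?thesis using y0mu by simp
      next
        case False
        then have "filling st p \<noteq> None" using h fill'[of p] by simp
        then show ?thesis using I4 by blast
      qed
    qed
    have J5: "\<forall>s. \<exists>B. \<forall>y. (s,y) \<in> outer st' \<longrightarrow> y \<le> B"
    proof
      fix s2
      obtain B2 where B2: "\<forall>y. (s2,y) \<in> outer st \<longrightarrow> y \<le> B2" using I5 by blast
      define y2 where "y2 = (SOME y'. (s2,y') \<in> ?O)"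
      have "\<forall>y. (s2,y) \<in> outer st' \<longrightarrow> y \<le> max B2 y2"
      proof (intro allI impI)
        fix y assume "(s2,y) \<in> outer st'"
        then have "(s2,y) \<in> outer st \<or> (s2,y) \<in> ?O" using land by simp
        then show "y \<le> max B2 y2"
        proof
          assume "(s2,y) \<in> outer st" then show ?thesis using B2 by fastforce
        next
          assume a: "(s2,y) \<in> ?O"
          then have "(s2,y2) \<in> ?O" unfolding y2_def by (rule someI)
          then have "y = y2" using orbit_row a k by blast
          then show ?thesis by simp
        qed
      qed
      then show "\<exists>B. \<forall>y. (s2,y) \<in> outer st' \<longrightarrow> y \<le> B" by blast
    qed
    have J6: "shape lam \<subseteq> outer st'" using I6 land by auto
    show ?thesis unfolding Inv_def using J0 J1 J2 J3 J4 J5 J6 by blast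
  next
    case (bump x s rest y1 x')
    let ?O = "orbit n k (s,y1)"
    let ?P = "\<lambda>y. \<exists>v. filling st (s, y) = Some v \<and> x < v"
    have log': "row_insertions r st' = row_insertions r st @ (if s mod k = r then [x] else [])" for r
      using bump unfolding row_insertions_def by simp
    have wl': "wl k r st' = wl k r st @ (if (s+1) mod k = r then [x'] else [])" for r
      using bump unfolding wl_def row_insertions_def by simp
    have fill': "filling st' q = (if q \<in> ?O then Some x else filling st q)" for q
      using bump unfolding upd_orbit_def by simp
    have logsub: "set (row_insertions r st) \<subseteq> set (row_insertions r st')" for r
      using log' by auto
    have xin: "x \<in> set (row_insertions (s mod k) st')" using log' by simp
    have "sorted (wl k (s mod k) st)" using I1 by blast
    then have hx: "\<forall>u\<in>set (row_insertions (s mod k) st). u \<le> x"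
      using bump(2) unfolding wl_def sorted_append by auto
    obtain ya va where ya: "filling st (s,ya) = Some va" "\<not> va \<le> x" using bump(3) by blast
    have Pa: "?P ya" using ya by auto
    have lb: "\<forall>y. ?P y \<longrightarrow> mu s \<le> y"
    proof (intro allI impI)
      fix y assume "?P y"
      then have "(s,y) \<notin> shape mu" using I4 by fastforce
      then show "mu s \<le> y" unfolding shape_def by simp
    qed
    have L: "?P y1 \<and> (\<forall>z. ?P z \<longrightarrow> y1 \<le> z)" using int_least[of ?P ya "mu s", OF Pa lb] bump(4) by simp
    then have xx': "x < x'" using bump(5) by auto
    have x'nlog: "x' \<notin> set (row_insertions (s mod k) st)" using hx xx' by fastforce
    have Fy1: "F (s,y1) = Some x'" using I3 bump(5) x'nlog by blast
    have hlt: "\<forall>u\<in>set (row_insertions (s mod k) st). u < x'" using hx xx' by fastforce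
    have hnew: "\<forall>w \<in> set (wl k ((s+1) mod k) st). w \<le> x'"
      using I2 bump(5) Fy1 hlt by blast
    have J0: "\<forall>x y. filling st' (x,y) = filling st' (x-k, y+(n-k))"
      using upd_orbit_inv[OF I0] bump by simp
    have J1: "\<forall>r. sorted (wl k r st')"
    proof
      fix r show "sorted (wl k r st')"
        using I1 hnew unfolding wl' by (auto simp: sorted_append)
    qed
    have J3: "\<forall>s y v. filling st' (s,y) = Some v \<longrightarrow> F (s,y) = Some v \<or> v \<in> set (row_insertions (s mod k) st')"
    proof (intro allI impI)
      fix s2 y v assume h: "filling st' (s2,y) = Some v"
      show "F (s2,y) = Some v \<or> v \<in> set (row_insertions (s2 mod k) st')"
      proof (cases "(s2,y) \<in> ?O")
        case True
        then have "s2 mod k = s mod k" using orbit_mod by fastforce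
        then show ?thesis using True h fill' xin by simp
      next
        case False
        then show ?thesis using h fill' I3 logsub by fastforce
      qed
    qed
    have J2: "\<forall>s y v w. filling st' (s,y) = Some v \<longrightarrow> F (s,y) = Some v \<longrightarrow> (\<forall>u\<in>set (row_insertions (s mod k) st'). u < v)
      \<longrightarrow> w \<in> set (wl k ((s+1) mod k) st') \<longrightarrow> w \<le> v"
    proof (intro allI impI)
      fix s2 y v w
      assume h1: "filling st' (s2,y) = Some v" and h2: "F (s2,y) = Some v"
        and h3: "\<forall>u\<in>set (row_insertions (s2 mod k) st'). u < v"
        and h4: "w \<in> set (wl k ((s2+1) mod k) st')"
      have nO: "(s2,y) \<notin> ?O"
      proof
        assume a: "(s2,y) \<in> ?O"
        then have "s2 mod k = s mod k" using orbit_mod by fastforce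
        then have "x < v" using h3 xin by simp
        moreover have "v = x" using a h1 fill' by simp
        ultimately show False by simp
      qed
      then have fo: "filling st (s2,y) = Some v" using h1 fill' by simp
      have h3o: "\<forall>u\<in>set (row_insertions (s2 mod k) st). u < v" using h3 logsub by blast
      show "w \<le> v"
      proof (cases "w \<in> set (wl k ((s2+1) mod k) st)")
        case True then show ?thesis using I2 fo h2 h3o by blast
      next
        case False
        then have ww: "w = x'" and cl: "(s+1) mod k = (s2+1) mod k" using h4 wl' by (auto split: if_splits)
        have "s2 mod k = s mod k"
        proof -
          have "k dvd ((s+1) - (s2+1))" using cl by (metis mod_eq_dvd_iff)
          then have "k dvd (s - s2)" by simp
          then show ?thesis by (metis mod_eq_dvd_iff)
        qed
        define j where "j = (s - s2) div k"
        have s2j: "s2 = s - j*k" unfolding j_def using same_mod_shift[OF \<open>s2 mod k = s mod k\<close>] .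
        define y' where "y' = y - j*(n-k)"
        have "filling st (s2,y) = filling st (s2 - (-j)*k, y + (-j)*(n-k))"
          by (rule shift_int[OF I0])
        then have f1: "filling st (s,y') = Some v" using fo s2j unfolding y'_def by (simp add: algebra_simps)
        have "F (s2,y) = F (s2 - (-j)*k, y + (-j)*(n-k))"
          by (rule shift_int[OF Finv])
        then have f2: "F (s,y') = Some v" using h2 s2j unfolding y'_def by (simp add: algebra_simps)
        have "x < v" using h3 xin \<open>s2 mod k = s mod k\<close> by simp
        then have "?P y'" using f1 by blast
        then have "y1 \<le> y'" using L by blast
        then show ?thesis using F_row_mono'[OF T Fy1 f2] ww by simp
      qed
    qed
    have J4: "\<forall>p. filling st' p \<noteq> None \<longrightarrow> p \<notin> shape mu"
    proof (intro allI impI)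
      fix p assume h: "filling st' p \<noteq> None"
      show "p \<notin> shape mu"
      proof (cases "p \<in> ?O")
        case True
        have "filling st p = filling st (s,y1)" using orbit_inv[OF I0 True] .
        then have "filling st p \<noteq> None" using bump(5) by simp
        then show ?thesis using I4 by blast
      next
        case False
        then have "filling st p \<noteq> None" using h fill'[of p] by simp
        then show ?thesis using I4 by blast
      qed
    qed
    have J5: "\<forall>s. \<exists>B. \<forall>y. (s,y) \<in> outer st' \<longrightarrow> y \<le> B" using I5 bump by simp
    have J6: "shape lam \<subseteq> outer st'" using I6 bump by simp
    show ?thesis unfolding Inv_def using J0 J1 J2 J3 J4 J5 J6 by blast
  qed
qed


definition st_of :: "int \<Rightarrow> int \<Rightarrow> (int\<Rightarrow>int) \<Rightarrow> (int\<Rightarrow>int) \<Rightarrow> (int\<times>int \<Rightarrow> 'a option) \<Rightarrow> (int\<times>int) list \<Rightarrow> 'a fmst" where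
"st_of n k lam mu F ps = \<lparr>outer = shape lam \<union> (\<Union>p\<in>set ps. orbit n k p),
   inner = shape mu \<union> (\<Union>p\<in>set ps. orbit n k p),
   filling = (\<lambda>q. if q \<in> (\<Union>p\<in>set ps. orbit n k p) then None else F q),
   cur = map (\<lambda>b. (the (F b), fst b + 1)) (filter (\<lambda>b. b \<in> shape lam) ps),
   nxt = [], inslog = []\<rparr>"

lemma init_box_step:
  assumes Finv: "\<forall>x y. F (x,y) = F (x-k, y+(n-k))"
    and Fsup: "\<forall>p. F p \<noteq> None \<longrightarrow> p \<in> shape lam"
    and Linv: "\<forall>x y. ((x,y) \<in> shape lam) = ((x-k, y+(n-k)) \<in> shape lam)"
    and nb: "\<forall>p\<in>set ps. b \<notin> orbit n k p"
  shows "init_box n k b (st_of n k lam mu F ps) = st_of n k lam mu F (ps @ [b])"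
proof -
  let ?U = "\<Union>p\<in>set ps. orbit n k p"
  have bU: "b \<notin> ?U" using nb by blast
  show ?thesis
  proof (cases "b \<in> shape lam")
    case True
    have ob: "orbit n k b \<subseteq> shape lam"
    proof
      fix q assume "q \<in> orbit n k b"
      then have "(q \<in> shape lam) = (b \<in> shape lam)"
        using orbit_inv[where G="\<lambda>p. p \<in> shape lam", OF Linv] by blast
      then show "q \<in> shape lam" using True by simp
    qed
    have "b \<in> outer (st_of n k lam mu F ps)" using True unfolding st_of_def by simp
    then show ?thesis using True bU ob unfolding init_box_def st_of_def upd_orbit_def
      by (auto simp: fun_eq_iff)
  next
    case False
    have Fo: "\<forall>q\<in>orbit n k b. F q = None"
    proof
      fix q assume "q \<in> orbit n k b"
      then have "F q = F b" using orbit_inv[OF Finv] by blast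
      moreover have "F b = None" using Fsup False by blast
      ultimately show "F q = None" by simp
    qed
    have "b \<notin> outer (st_of n k lam mu F ps)" using False bU unfolding st_of_def by simp
    then show ?thesis using False bU Fo unfolding init_box_def st_of_def
      by (auto simp: fun_eq_iff)
  qed
qed

lemma fold_init:
  assumes Finv: "\<forall>x y. F (x,y) = F (x-k, y+(n-k))"
    and Fsup: "\<forall>p. F p \<noteq> None \<longrightarrow> p \<in> shape lam"
    and Linv: "\<forall>x y. ((x,y) \<in> shape lam) = ((x-k, y+(n-k)) \<in> shape lam)"
  shows "sorted_wrt (\<lambda>a b. b \<notin> orbit n k a) (ps @ bs) \<Longrightarrow>
     fold (init_box n k) bs (st_of n k lam mu F ps) = st_of n k lam mu F (ps @ bs)"
proof (induction bs arbitrary: ps)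
  case Nil then show ?case by simp
next
  case (Cons b bs)
  have nb: "\<forall>p\<in>set ps. b \<notin> orbit n k p" using Cons.prems by (simp add: sorted_wrt_append)
  have "fold (init_box n k) (b#bs) (st_of n k lam mu F ps) = fold (init_box n k) bs (st_of n k lam mu F (ps @ [b]))"
    using init_box_step[OF Finv Fsup Linv nb] by simp
  also have "\<dots> = st_of n k lam mu F ((ps @ [b]) @ bs)"
    using Cons.IH[of "ps @ [b]"] Cons.prems by simp
  finally show ?case by simp
qed

definition lexl :: "int \<times> int \<Rightarrow> int \<times> int \<Rightarrow> bool" where
  "lexl a b \<longleftrightarrow> fst a < fst b \<or> (fst a = fst b \<and> snd a < snd b)"

lemma lexl_concat:
  assumes "\<forall>h. sorted_wrt (<) (g h)"
  shows "sorted_wrt (<) hs \<Longrightarrow> sorted_wrt lexl (concat (map (\<lambda>h. map (\<lambda>y. (h,y)) (g h)) hs))"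
proof (induction hs)
  case Nil then show ?case by simp
next
  case (Cons h hs)
  have a: "sorted_wrt lexl (map (\<lambda>y. (h,y)) (g h))"
    using assms by (simp add: sorted_wrt_map lexl_def)
  have b: "\<forall>x\<in>set (map (\<lambda>y. (h,y)) (g h)). \<forall>z\<in>set (concat (map (\<lambda>h. map (\<lambda>y. (h,y)) (g h)) hs)). lexl x z"
    using Cons.prems by (auto simp: lexl_def)
  have c: "sorted_wrt lexl (concat (map (\<lambda>h. map (\<lambda>y. (h,y)) (g h)) hs))"
    using Cons.IH Cons.prems by simp
  show ?case using a b c by (simp only: list.map concat.simps sorted_wrt_append)
qed

lemma sorted_wrt_filter_cond:
  "sorted_wrt (\<lambda>a b. P a \<longrightarrow> P b \<longrightarrow> R a b) xs \<Longrightarrow> sorted_wrt R (filter P xs)"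
  by (induction xs) auto

lemma window_eq:
  fixes h h' r0 k :: int
  assumes "r0 \<le> h" "h \<le> r0 + k - 1" "r0 \<le> h'" "h' \<le> r0 + k - 1" "h mod k = h' mod k"
  shows "h = h'"
proof (rule ccontr)
  assume ne: "h \<noteq> h'"
  have d: "k dvd (h - h')" using assms(5) by (metis mod_eq_dvd_iff)
  show False
  proof (cases "h < h'")
    case True
    have "k dvd (h' - h)" using d by (metis dvd_diff_commute)
    then have "k \<le> h' - h" using True zdvd_imp_le by simp
    then show False using assms by simp
  next
    case False
    then have "k \<le> h - h'" using d ne zdvd_imp_le by simp
    then show False using assms by simp
  qed
qed


lemma modp1:
  fixes a b k :: int
  assumes "(a+1) mod k = (b+1) mod k" shows "a mod k = b mod k"
proof -
  have "k dvd ((a+1) - (b+1))" using assms by (metis mod_eq_dvd_iff)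
  then have "k dvd (a - b)" by simp
  then show ?thesis by (metis mod_eq_dvd_iff)
qed

lemma Inv_init:
  fixes F :: "int \<times> int \<Rightarrow> 'a::linorder option"
  assumes k: "1 \<le> k" and T: "cyl_tableau n k lam mu F" and M: "multi_input n k mu S"
  shows "Inv n k lam mu F (fm_init n k lam mu F S r0)"
proof -
  have lamP: "cyl_part n k lam" and muP: "cyl_part n k mu" and mule: "\<forall>m. mu m \<le> lam m"
    and Fsup': "\<forall>x y. F (x, y) \<noteq> None \<longleftrightarrow> mu x < y \<and> y \<le> lam x"
    and Finv: "\<forall>x y. F (x,y) = F (x-k, y+(n-k))"
    using T unfolding cyl_tableau_def by blast+
  have Sinv: "\<forall>x y. ((x, y) \<in> S) = ((x - k, y + (n - k)) \<in> S)"
    and Smu: "S \<inter> shape mu = {}"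
    using M unfolding multi_input_def by blast+
  obtain nu where nuP: "cyl_part n k nu" and nuS: "shape nu = shape mu \<union> S"
    using M unfolding multi_input_def by blast
  have Fsup: "\<forall>p. F p \<noteq> None \<longrightarrow> p \<in> shape lam"
  proof (intro allI impI)
    fix p :: "int \<times> int" assume "F p \<noteq> None"
    then show "p \<in> shape lam" using Fsup' unfolding shape_def by (cases p) auto
  qed
  have Linv: "\<forall>x y. ((x,y) \<in> shape lam) = ((x-k, y+(n-k)) \<in> shape lam)"
    using cyl_shape_inv[OF lamP] .
  have rowfin: "finite {y. (h,y) \<in> S}" for h
  proof (rule finite_subset)
    show "{y. (h,y) \<in> S} \<subseteq> {mu h<..nu h}"
    proof
      fix y assume "y \<in> {y. (h,y) \<in> S}"
      then have a: "(h,y) \<in> S" by simp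
      then have "(h,y) \<in> shape nu" using nuS by blast
      moreover have "(h,y) \<notin> shape mu" using a Smu by blast
      ultimately show "y \<in> {mu h<..nu h}" unfolding shape_def by simp
    qed
  qed simp
  define bs where "bs = init_order k S r0"
  have setbs: "set bs = {p. p \<in> S \<and> r0 \<le> fst p \<and> fst p \<le> r0+k-1}"
    unfolding bs_def init_order_def using rowfin by auto
  have sortbs: "sorted_wrt lexl bs"
    unfolding bs_def init_order_def
    by (rule lexl_concat) (simp_all add: strict_sorted_list_of_set)
  have distorb: "sorted_wrt (\<lambda>a b. b \<notin> orbit n k a) bs"
  proof (rule sorted_wrt_mono_rel[OF _ sortbs])
    fix a b assume ab: "a \<in> set bs" "b \<in> set bs" "lexl a b"
    show "b \<notin> orbit n k a"
    proof
      assume o: "b \<in> orbit n k a"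
      then obtain j where bj: "b = (fst a - j*k, snd a + j*(n-k))" using orbit_mem by blast
      have "fst b mod k = fst a mod k" using orbit_mod[of "fst b" "snd b"] o by simp
      then have "fst b = fst a" using window_eq ab setbs by auto
      then have "j*k = 0" using bj by simp
      then have "j = 0" using k by simp
      then have "b = a" using bj by simp
      then show False using ab(3) unfolding lexl_def by simp
    qed
  qed
  have init: "fm_init n k lam mu F S r0 = st_of n k lam mu F bs"
  proof -
    have e0: "st_of n k lam mu F [] = \<lparr>outer = shape lam, inner = shape mu, filling = F, cur = [], nxt = [], inslog = []\<rparr>"
      unfolding st_of_def by simp
    have "fold (init_box n k) bs (st_of n k lam mu F []) = st_of n k lam mu F ([] @ bs)"
      by (rule fold_init[OF Finv Fsup Linv]) (use distorb in simp)
    then show ?thesis unfolding fm_init_def bs_def[symmetric] e0 by simp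
  qed
  define U where "U = (\<Union>p\<in>set bs. orbit n k p)"
  have cover: "\<forall>p\<in>S. p \<in> U"
  proof
    fix p assume pS: "p \<in> S"
    define j where "j = (fst p - r0) div k"
    define q where "q = (fst p - j*k, snd p + j*(n-k))"
    have "(p \<in> S) = (q \<in> S)" unfolding q_def
      using shift_int[where G="\<lambda>p. p \<in> S", OF Sinv, of "fst p" "snd p" j] by simp
    then have qS: "q \<in> S" using pS by simp
    have "fst q = r0 + (fst p - r0) mod k" unfolding q_def j_def
      by (simp add: minus_div_mult_eq_mod[symmetric] algebra_simps)
    moreover have "0 \<le> (fst p - r0) mod k" "(fst p - r0) mod k < k" using k by simp_all
    ultimately have "q \<in> set bs" using setbs qS by auto
    moreover have "p \<in> orbit n k q" unfolding orbit_mem q_def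
      by (intro exI[of _ "-j"]) (simp add: algebra_simps)
    ultimately show "p \<in> U" unfolding U_def by blast
  qed
  have Usub: "U \<subseteq> S"
  proof
    fix q assume "q \<in> U"
    then obtain p where p: "p \<in> set bs" "q \<in> orbit n k p" unfolding U_def by blast
    then have "(q \<in> S) = (p \<in> S)" using orbit_inv[where G="\<lambda>p. p \<in> S", OF Sinv] by blast
    then show "q \<in> S" using p setbs by auto
  qed
  let ?st = "st_of n k lam mu F bs"
  have fill: "filling ?st q = (if q \<in> U then None else F q)" for q
    unfolding st_of_def U_def by simp
  have outr: "outer ?st = shape lam \<union> U" unfolding st_of_def U_def by simp
  have logs: "row_insertions r ?st = []" for r unfolding st_of_def row_insertions_def by simp
  have wlr: "wl k r ?st = map (\<lambda>b. the (F b)) (filter (\<lambda>b. b \<in> shape lam \<and> (fst b + 1) mod k = r) bs)" for r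
    unfolding wl_def st_of_def row_insertions_def by (simp add: filter_map o_def filter_filter)
  have core: "the (F a) \<le> the (F b)"
    if ab: "a \<in> set bs" "b \<in> set bs" "lexl a b" "a \<in> shape lam" "b \<in> shape lam"
        "(fst a + 1) mod k = (fst b + 1) mod k" for a b
  proof -
    have "fst a mod k = fst b mod k" using modp1 ab(6) .
    then have fe: "fst a = fst b" using window_eq ab setbs by auto
    then have lt: "snd a < snd b" using ab(3) unfolding lexl_def by simp
    have "a \<notin> shape mu" "b \<notin> shape mu" using ab setbs Smu by auto
    then have "F a \<noteq> None" "F b \<noteq> None" using ab(4,5) Fsup' unfolding shape_def
      by (cases a, auto)+
    then obtain va vb where va: "F a = Some va" and vb: "F b = Some vb" by auto
    have "F (fst a, snd a) = Some va" using va by simp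
    moreover have "F (fst a, snd b) = Some vb" using vb fe by simp
    ultimately have "va \<le> vb" using F_row_mono'[OF T] lt by fastforce
    then show ?thesis using va vb by simp
  qed
  have J0: "\<forall>x y. filling ?st (x,y) = filling ?st (x-k, y+(n-k))"
  proof (intro allI)
    fix x y
    have os: "\<And>p. ((x,y) \<in> orbit n k p) = ((x-k, y+(n-k)) \<in> orbit n k p)" by (rule orbit_shift)
    have "((x,y) \<in> U) = ((x-k, y+(n-k)) \<in> U)" unfolding U_def using os by blast
    then show "filling ?st (x,y) = filling ?st (x-k, y+(n-k))" unfolding fill using Finv by simp
  qed
  have J1: "\<forall>r. sorted (wl k r ?st)"
  proof
    fix r
    have "sorted_wrt (\<lambda>a b. (a \<in> shape lam \<and> (fst a + 1) mod k = r) \<longrightarrow> (b \<in> shape lam \<and> (fst b + 1) mod k = r)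
           \<longrightarrow> the (F a) \<le> the (F b)) bs"
      by (rule sorted_wrt_mono_rel[OF _ sortbs]) (use core in auto)
    then have "sorted_wrt (\<lambda>a b. the (F a) \<le> the (F b)) (filter (\<lambda>b. b \<in> shape lam \<and> (fst b + 1) mod k = r) bs)"
      by (rule sorted_wrt_filter_cond)
    then show "sorted (wl k r ?st)" unfolding wlr sorted_map .
  qed
  have J3: "\<forall>s y v. filling ?st (s,y) = Some v \<longrightarrow> F (s,y) = Some v \<or> v \<in> set (row_insertions (s mod k) ?st)"
    unfolding fill by (auto split: if_splits)
  have J4: "\<forall>p. filling ?st p \<noteq> None \<longrightarrow> p \<notin> shape mu"
  proof (intro allI impI)
    fix p :: "int \<times> int" assume "filling ?st p \<noteq> None"
    then have "F p \<noteq> None" unfolding fill by (auto split: if_splits)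
    then show "p \<notin> shape mu" using Fsup' unfolding shape_def by (cases p) auto
  qed
  have J5: "\<forall>s. \<exists>B. \<forall>y. (s,y) \<in> outer ?st \<longrightarrow> y \<le> B"
  proof
    fix s
    have "\<forall>y. (s,y) \<in> outer ?st \<longrightarrow> y \<le> max (lam s) (nu s)"
    proof (intro allI impI)
      fix y assume "(s,y) \<in> outer ?st"
      then have "(s,y) \<in> shape lam \<or> (s,y) \<in> shape nu" using outr Usub nuS by blast
      then show "y \<le> max (lam s) (nu s)" unfolding shape_def by auto
    qed
    then show "\<exists>B. \<forall>y. (s,y) \<in> outer ?st \<longrightarrow> y \<le> B" by blast
  qed
  have J6: "shape lam \<subseteq> outer ?st" using outr by simp
  have J2: "\<forall>s y v w. filling ?st (s,y) = Some v \<longrightarrow> F (s,y) = Some v \<longrightarrow> (\<forall>u\<in>set (row_insertions (s mod k) ?st). u < v)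
      \<longrightarrow> w \<in> set (wl k ((s+1) mod k) ?st) \<longrightarrow> w \<le> v"
  proof (intro allI impI)
    fix s y v w
    assume h1: "filling ?st (s,y) = Some v" and h2: "F (s,y) = Some v"
      and h4: "w \<in> set (wl k ((s+1) mod k) ?st)"
    have nU: "(s,y) \<notin> U" using h1 unfolding fill by (auto split: if_splits)
    obtain b where b: "b \<in> set bs" "b \<in> shape lam" "(fst b + 1) mod k = (s+1) mod k" "w = the (F b)"
      using h4 unfolding wlr by auto
    have "s mod k = fst b mod k" using modp1[OF b(3)] by simp
    define j where "j = (fst b - s) div k"
    have sj: "s = fst b - j*k" unfolding j_def using same_mod_shift[OF \<open>s mod k = fst b mod k\<close>] .
    define q where "q = (s, snd b + j*(n-k))"
    have qo: "q \<in> orbit n k b" unfolding orbit_mem q_def using sj by blast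
    have Fq: "F q = F b" using orbit_inv[OF Finv qo] .
    have qU: "q \<in> U" unfolding U_def using qo b(1) by blast
    then have qS: "q \<in> S" using Usub by blast
    then have "q \<in> shape nu" using nuS by blast
    then have sq: "snd q \<le> nu s" unfolding q_def shape_def by simp
    have "(s,y) \<notin> S" using nU cover by blast
    moreover have "mu s < y" using h2 Fsup' by blast
    then have "(s,y) \<notin> shape mu" unfolding shape_def by simp
    ultimately have "(s,y) \<notin> shape nu" using nuS by blast
    then have "nu s < y" unfolding shape_def by simp
    have "b \<in> S" using b(1) setbs by simp
    then have "b \<notin> shape mu" using Smu by blast
    then have "F b \<noteq> None" using b(2) Fsup' unfolding shape_def by (cases b) auto
    then have "F q = Some w" using Fq b(4) by auto
    then have "F (s, snd q) = Some w" unfolding q_def by simp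
    moreover have "snd q \<le> y" using sq \<open>nu s < y\<close> by simp
    ultimately show "w \<le> v" using F_row_mono'[OF T _ h2] by blast
  qed
  show ?thesis unfolding init Inv_def using J0 J1 J2 J3 J4 J5 J6 by blast
qed


theorem mainTheorem14:
  fixes n k r0 :: int
    and lam mu :: "int \<Rightarrow> int"
    and F :: "int \<times> int \<Rightarrow> 'a::linorder option"
    and S :: "(int \<times> int) set"
    and st :: "'a fmst"
  assumes "1 \<le> k" and "k < n"
    and "cyl_tableau n k lam mu F"
    and "multi_input n k mu S"
    and "(fm_step n k)\<^sup>*\<^sup>* (fm_init n k lam mu F S r0) st"
  shows "\<forall>r. sorted (row_insertions r st)"
proof
  fix r
  have "Inv n k lam mu F st"
    using assms(5)
  proof (induction rule: rtranclp_induct)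
    case base
    then show ?case using Inv_init[OF assms(1) assms(3) assms(4)] .
  next
    case (step y z)
    then show ?case using Inv_step[OF assms(1) assms(3)] by blast
  qed
  then show "sorted (row_insertions r st)" by (rule Inv_final)
qed

end
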